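(* Let $L, C_H, C_L, R_D, R_H, R_L, E_H, E_L$ be positive constants and set $$\alpha=\frac{1}{R_{DH}C_H},\qquad R_{DH}=\frac{R_DR_H}{R_D+R_H},\qquad \beta_H=\frac{E_H}{R_HC_H},\qquad \beta_L=\frac{E_L}{R_LC_L}.$$ Consider the system $$\dot x_1=-\frac{1}{L}x_3+\frac{1}{L}x_2u,\qquad \dot x_2=-\alpha x_2-\frac{1}{C_H}x_1u+\beta_H,\qquad \dot x_3=\frac{1}{C_L}x_1-\frac{1}{R_LC_L}x_3+\beta_L,$$ where $u=u(t)$ is any control with $u\in\mathcal L_\infty$ (an essentially bounded function of time). Then the system is uniformly stable, i.e. every solution $\xi(t)$ of the system (for this $u$) is uniformly stable: for every $\varepsilon>0$ there is $\delta>0$, independent of the initial time $t_0$, such that any solution $x(t)$ with $\|x(t_0)-\xi(t_0)\|<\delta$ satisfies $\|x(t)-\xi(t)\|<\varepsilon$ for all $t\ge t_0$.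
   Context: The system models a bidirectional buck-boost DC-DC converter: $x_1$ is the inductor current, $x_2$ the high-voltage-side capacitor voltage, $x_3$ the low-voltage-side capacitor voltage; $E_H,R_H$ are the high-voltage source and its internal resistance, $E_L,R_L$ the battery voltage and internal resistance, $R_D$ the load resistance. *)

theory Defs
  imports "HOL-Analysis.Analysis"
begin

definition bbc_field ::
  "real \<Rightarrow> real \<Rightarrow> real \<Rightarrow> real \<Rightarrow> real \<Rightarrow> real \<Rightarrow> real \<Rightarrow> real \<Rightarrow> real \<Rightarrow> real^3 \<Rightarrow> real^3" where
  "bbc_field L C_H C_L R_D R_H R_L E_H E_L v x =
     (let R_DH = R_D * R_H / (R_D + R_H);
          \<alpha> = 1 / (R_DH * C_H);
          \<beta>_H = E_H / (R_H * C_H);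
          \<beta>_L = E_L / (R_L * C_L)
      in vector [ - (1 / L) * x$3 + (1 / L) * x$2 * v,
                  - \<alpha> * x$2 - (1 / C_H) * x$1 * v + \<beta>_H,
                  (1 / C_L) * x$1 - (1 / (R_L * C_L)) * x$3 + \<beta>_L ])"

definition ess_bounded :: "(real \<Rightarrow> real) \<Rightarrow> bool" where
  "ess_bounded u \<longleftrightarrow> u \<in> borel_measurable lborel \<and> (\<exists>B. AE t in lborel. \<bar>u t\<bar> \<le> B)"

text \<open>Solution (in the Caratheodory / integral sense) of x' = f (u t) x on [T, infinity).\<close>
definition is_solution_from ::
  "(real \<Rightarrow> real^3 \<Rightarrow> real^3) \<Rightarrow> (real \<Rightarrow> real) \<Rightarrow> (real \<Rightarrow> real^3) \<Rightarrow> real \<Rightarrow> bool" where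
  "is_solution_from f u x T \<longleftrightarrow>
     (\<forall>s t. T \<le> s \<longrightarrow> s \<le> t \<longrightarrow> ((\<lambda>r. f (u r) (x r)) has_integral (x t - x s)) {s..t})"

definition uniformly_stable_solution ::
  "(real \<Rightarrow> real^3 \<Rightarrow> real^3) \<Rightarrow> (real \<Rightarrow> real) \<Rightarrow> (real \<Rightarrow> real^3) \<Rightarrow> real \<Rightarrow> bool" where
  "uniformly_stable_solution f u \<xi> T \<longleftrightarrow>
     (\<forall>\<epsilon>>0. \<exists>\<delta>>0. \<forall>t0 x. T \<le> t0 \<longrightarrow> is_solution_from f u x t0 \<longrightarrow>
        norm (x t0 - \<xi> t0) < \<delta> \<longrightarrow> (\<forall>t\<ge>t0. norm (x t - \<xi> t) < \<epsilon>))"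

end

theory Submission
  imports Defs
begin

definition linf :: "real \<Rightarrow> real \<Rightarrow> real \<Rightarrow> real \<Rightarrow> real \<Rightarrow> real \<Rightarrow> real \<Rightarrow> real^3 \<Rightarrow> real^3" where
  "linf L C_H C_L R_D R_H R_L v w =
     vector [ - (1 / L) * w$3 + (1 / L) * w$2 * v,
              - (1 / ((R_D * R_H / (R_D + R_H)) * C_H)) * w$2 - (1 / C_H) * w$1 * v,
              (1 / C_L) * w$1 - (1 / (R_L * C_L)) * w$3 ]"

definition Pm :: "real \<Rightarrow> real \<Rightarrow> real \<Rightarrow> real^3 \<Rightarrow> real^3" where
  "Pm L C_H C_L w = vector [L * w$1, C_H * w$2, C_L * w$3]"

lemma field_diff:
  "bbc_field L C_H C_L R_D R_H R_L E_H E_L v x - bbc_field L C_H C_L R_D R_H R_L E_H E_L v y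
   = linf L C_H C_L R_D R_H R_L v (x - y)"
  by (simp add: vec_eq_iff forall_3 bbc_field_def linf_def Let_def algebra_simps)

lemma inner3: "inner (a::real^3) b = a$1*b$1 + a$2*b$2 + a$3*b$3"
  by (simp add: inner_vec_def sum_3)

lemma normsq3: "(norm (a::real^3))^2 = (a$1)^2 + (a$2)^2 + (a$3)^2"
  unfolding power2_norm_eq_inner inner3 by (simp add: power2_eq_square)

lemma dissip:
  assumes "L > 0" "C_H > 0" "C_L > 0" "R_D > 0" "R_H > 0" "R_L > 0"
  shows "inner (Pm L C_H C_L w) (linf L C_H C_L R_D R_H R_L v w) \<le> 0"
proof -
  have a: "1 / ((R_D * R_H / (R_D + R_H)) * C_H) > 0" using assms by simp
  have "inner (Pm L C_H C_L w) (linf L C_H C_L R_D R_H R_L v w)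
     = - (C_H * (1 / ((R_D * R_H / (R_D + R_H)) * C_H))) * (w$2)^2 - (1/R_L) * (w$3)^2"
    using assms by (simp add: inner3 Pm_def linf_def field_simps power2_eq_square)
  also have "\<dots> \<le> 0"
  proof -
    have "0 \<le> (C_H * (1 / ((R_D * R_H / (R_D + R_H)) * C_H))) * (w$2)^2"
      using a assms by (intro mult_nonneg_nonneg) simp_all
    moreover have "0 \<le> (1/R_L) * (w$3)^2" using assms by simp
    ultimately show ?thesis by (simp only: mult_minus_left)
  qed
  finally show ?thesis .
qed

lemma Q_bounds:
  assumes "L > 0" "C_H > 0" "C_L > 0"
  shows "min L (min C_H C_L) * (norm d)^2 \<le> inner d (Pm L C_H C_L d)"
    and "inner d (Pm L C_H C_L d) \<le> max L (max C_H C_L) * (norm d)^2"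
proof -
  have e: "inner d (Pm L C_H C_L d) = L*(d$1)^2 + C_H*(d$2)^2 + C_L*(d$3)^2"
    by (simp add: inner3 Pm_def power2_eq_square)
  have "min L (min C_H C_L) * (d$1)^2 \<le> L*(d$1)^2" by (simp add: mult_right_mono)
  moreover have "min L (min C_H C_L) * (d$2)^2 \<le> C_H*(d$2)^2" by (simp add: mult_right_mono)
  moreover have "min L (min C_H C_L) * (d$3)^2 \<le> C_L*(d$3)^2" by (simp add: mult_right_mono)
  ultimately show "min L (min C_H C_L) * (norm d)^2 \<le> inner d (Pm L C_H C_L d)"
    unfolding e normsq3 by (simp add: distrib_left)
  have "L*(d$1)^2 \<le> max L (max C_H C_L) * (d$1)^2" by (simp add: mult_right_mono)
  moreover have "C_H*(d$2)^2 \<le> max L (max C_H C_L) * (d$2)^2" by (simp add: mult_right_mono)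
  moreover have "C_L*(d$3)^2 \<le> max L (max C_H C_L) * (d$3)^2" by (simp add: mult_right_mono)
  ultimately show "inner d (Pm L C_H C_L d) \<le> max L (max C_H C_L) * (norm d)^2"
    unfolding e normsq3 by (simp add: distrib_left)
qed

lemma Pm_norm:
  assumes "L > 0" "C_H > 0" "C_L > 0"
  shows "norm (Pm L C_H C_L d) \<le> (L + C_H + C_L) * norm d"
proof -
  have "norm (Pm L C_H C_L d) \<le> \<bar>L * d$1\<bar> + \<bar>C_H * d$2\<bar> + \<bar>C_L * d$3\<bar>"
    using norm_le_l1_cart[of "Pm L C_H C_L d"] by (simp add: sum_3 Pm_def)
  also have "\<dots> \<le> L * norm d + C_H * norm d + C_L * norm d"
    using assms component_le_norm_cart[of d 1] component_le_norm_cart[of d 2] component_le_norm_cart[of d 3]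
    by (intro add_mono) (simp_all add: abs_mult)
  finally show ?thesis by (simp add: distrib_right)
qed

lemma comb1:
  fixes x y v p q n B :: real
  assumes "(abs (x)) \<le> n" "(abs (y)) \<le> n" "(abs (v)) \<le> B"
  shows "(abs (p*x + q*y * v)) \<le> ((abs (p)) + (abs (q))*B) * n"
proof -
  have "(abs (p*x + q*y * v)) \<le> (abs (p))*(abs (x)) + (abs (q))*((abs (y))*(abs (v)))"
    using abs_triangle_ineq[of "p*x" "q*y * v"] by (simp add: abs_mult mult.assoc)
  also have "\<dots> \<le> (abs (p))*n + (abs (q))*(n*B)"
    using assms by (intro add_mono mult_left_mono mult_mono) auto
  finally show ?thesis by (simp add: algebra_simps)
qed

lemma comb2:
  fixes x y p q n :: real
  assumes "(abs (x)) \<le> n" "(abs (y)) \<le> n"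
  shows "(abs (p*x + q*y)) \<le> ((abs (p)) + (abs (q))) * n"
proof -
  have "(abs (p*x + q*y)) \<le> (abs (p))*(abs (x)) + (abs (q))*(abs (y))"
    using abs_triangle_ineq[of "p*x" "q*y"] by (simp add: abs_mult)
  also have "\<dots> \<le> (abs (p))*n + (abs (q))*n"
    using assms by (intro add_mono mult_left_mono) auto
  finally show ?thesis by (simp add: algebra_simps)
qed

lemma linf_norm:
  "\<exists>K. \<forall>v w. (abs (v)) \<le> B \<longrightarrow> norm (linf L C_H C_L R_D R_H R_L v w) \<le> K * norm w"
proof -
  define a where "a = 1 / ((R_D * R_H / (R_D + R_H)) * C_H)"
  define K where "K = ((abs (-(1/L))) + (abs (1/L))*B) + ((abs (-a)) + (abs (-(1/C_H)))*B) + ((abs (1/C_L)) + (abs (-(1/(R_L*C_L)))))"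
  have "norm (linf L C_H C_L R_D R_H R_L v w) \<le> K * norm w" if vB: "(abs (v)) \<le> B" for v w
  proof -
    have n1: "(abs (w$1)) \<le> norm w" "(abs (w$2)) \<le> norm w" "(abs (w$3)) \<le> norm w" by (rule component_le_norm_cart)+
    have l: "linf L C_H C_L R_D R_H R_L v w = vector [(-(1/L))*w$3 + (1/L)*w$2 * v,
       (-a)*w$2 + (-(1/C_H))*w$1 * v, (1/C_L)*w$1 + (-(1/(R_L*C_L)))*w$3]"
      by (simp add: linf_def a_def)
    have "norm (linf L C_H C_L R_D R_H R_L v w) \<le>
      (abs ((-(1/L))*w$3 + (1/L)*w$2 * v)) + (abs ((-a)*w$2 + (-(1/C_H))*w$1 * v))
      + (abs ((1/C_L)*w$1 + (-(1/(R_L*C_L)))*w$3))"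
      using norm_le_l1_cart[of "linf L C_H C_L R_D R_H R_L v w"] unfolding l by (simp add: sum_3)
    also have "\<dots> \<le> ((abs (-(1/L))) + (abs (1/L))*B) * norm w + ((abs (-a)) + (abs (-(1/C_H)))*B) * norm w
        + ((abs (1/C_L)) + (abs (-(1/(R_L*C_L))))) * norm w"
      by (intro add_mono comb1 comb2 n1 vB)
    also have "\<dots> = K * norm w" by (simp add: K_def algebra_simps)
    finally show ?thesis .
  qed
  then show ?thesis by blast
qed


lemma Pm_diff: "Pm L C_H C_L a - Pm L C_H C_L b = Pm L C_H C_L (a - b)"
  by (simp add: vec_eq_iff forall_3 Pm_def algebra_simps)

lemma Q_expand:
  "inner y (Pm L C_H C_L y) - inner x (Pm L C_H C_L x)
   = 2 * inner (Pm L C_H C_L x) (y - x) + inner (y - x) (Pm L C_H C_L (y - x))"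
  by (simp add: inner3 Pm_def algebra_simps power2_eq_square)

lemma subdiv:
  fixes \<phi> :: "real \<Rightarrow> real"
  assumes ab: "a \<le> b" and h: "\<And>s t. a \<le> s \<Longrightarrow> s \<le> t \<Longrightarrow> t \<le> b \<Longrightarrow> \<phi> t - \<phi> s \<le> K * (t - s)^2"
  shows "\<phi> b \<le> \<phi> a"
proof -
  have main: "\<phi> b - \<phi> a \<le> K * (b - a)^2 / real n" if n: "n > 0" for n :: nat
  proof -
    define d where "d = (b - a) / real n"
    have d0: "d \<ge> 0" using ab n by (simp add: d_def)
    have "k \<le> n \<longrightarrow> \<phi> (a + real k * d) - \<phi> a \<le> real k * (K * d^2)" for k
    proof (induction k)
      case 0 then show ?case by simp
    next
      case (Suc k)
      show ?case
      proof
        assume k: "Suc k \<le> n"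
        have le: "a + real (Suc k) * d \<le> b"
        proof -
          have "real (Suc k) * d \<le> real n * d" using k d0 by (intro mult_right_mono) auto
          also have "real n * d = b - a" using n by (simp add: d_def)
          finally show ?thesis by simp
        qed
        have "\<phi> (a + real (Suc k) * d) - \<phi> (a + real k * d) \<le> K * ((a + real (Suc k) * d) - (a + real k * d))^2"
          using le d0 by (intro h) (auto simp: algebra_simps)
        also have "\<dots> = K * d^2" by (simp add: algebra_simps)
        finally show "\<phi> (a + real (Suc k) * d) - \<phi> a \<le> real (Suc k) * (K * d^2)"
          using Suc.IH k by (simp add: algebra_simps)
      qed
    qed
    from this[of n] have "\<phi> (a + real n * d) - \<phi> a \<le> real n * (K * d^2)" by simp
    moreover have "a + real n * d = b" using n by (simp add: d_def)
    moreover have "real n * (K * d^2) = K * (b - a)^2 / real n"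
      using n by (simp add: d_def power2_eq_square field_simps)
    ultimately show ?thesis by simp
  qed
  show ?thesis
  proof (rule ccontr)
    assume "\<not> ?thesis"
    then have dpos: "\<phi> b - \<phi> a > 0" by simp
    obtain n :: nat where nlt: "\<bar>K\<bar> * (b - a)^2 / (\<phi> b - \<phi> a) < real n" using reals_Archimedean2 by blast
    have npos: "n > 0" using nlt dpos
      by (metis divide_nonneg_pos of_nat_0 zero_le_power2 abs_ge_zero zero_le_mult_iff not_less not_gr_zero)
    have "\<bar>K\<bar> * (b - a)^2 < real n * (\<phi> b - \<phi> a)" using nlt dpos by (simp add: field_simps)
    moreover have "real n * (\<phi> b - \<phi> a) \<le> K * (b - a)^2"
      using main[OF npos] npos by (simp add: field_simps)
    moreover have "K * (b - a)^2 \<le> \<bar>K\<bar> * (b - a)^2" by (simp add: mult_right_mono)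
    ultimately show False by linarith
  qed
qed

lemma energy:
  fixes e :: "real \<Rightarrow> real^3" and ub :: "real \<Rightarrow> real" and t0 t1 B :: real
  assumes pos: "L > 0" "C_H > 0" "C_L > 0" "R_D > 0" "R_H > 0" "R_L > 0"
    and ubB: "\<And>r. \<bar>ub r\<bar> \<le> B"
    and sol: "\<And>s t. t0 \<le> s \<Longrightarrow> s \<le> t \<Longrightarrow>
       ((\<lambda>r. linf L C_H C_L R_D R_H R_L (ub r) (e r)) has_integral (e t - e s)) {s..t}"
    and t01: "t0 \<le> t1"
  shows "inner (e t1) (Pm L C_H C_L (e t1)) \<le> inner (e t0) (Pm L C_H C_L (e t0))"
proof -
  define g where "g r = linf L C_H C_L R_D R_H R_L (ub r) (e r)" for r
  define Q where "Q d = inner d (Pm L C_H C_L d)" for d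
  define P3 where "P3 = L + C_H + C_L"
  define Mx where "Mx = max L (max C_H C_L)"
  have P3: "P3 \<ge> 0" using pos by (simp add: P3_def)
  have Mx: "Mx \<ge> 0" using pos by (simp add: Mx_def)
  have solg: "t0 \<le> s \<Longrightarrow> s \<le> t \<Longrightarrow> (g has_integral (e t - e s)) {s..t}" for s t
    using sol unfolding g_def by blast
  have ginteg: "g integrable_on {t0..t1}" using solg[OF order_refl t01] by (rule has_integral_integrable)
  have eint: "e r = e t0 + integral {t0..r} g" if "r \<in> {t0..t1}" for r
    using solg[of t0 r] that by (simp add: integral_unique)
  have "continuous_on {t0..t1} (\<lambda>r. e t0 + integral {t0..r} g)"
    by (rule continuous_on_add[OF continuous_on_const indefinite_integral_continuous_1[OF ginteg]])
  then have econt: "continuous_on {t0..t1} e"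
  proof (rule continuous_on_eq)
    fix r assume "r \<in> {t0..t1}"
    then show "e t0 + integral {t0..r} g = e r" using eint by metis
  qed
  have "bounded (e ` {t0..t1})"
    by (intro compact_imp_bounded compact_continuous_image econt compact_Icc)
  then obtain E where E: "E > 0" "\<And>r. r \<in> {t0..t1} \<Longrightarrow> norm (e r) \<le> E"
    unfolding bounded_pos by blast
  obtain K where K: "\<And>v w. \<bar>v\<bar> \<le> B \<Longrightarrow> norm (linf L C_H C_L R_D R_H R_L v w) \<le> K * norm w"
    using linf_norm by blast
  define M where "M = max K 0 * E"
  have M0: "M \<ge> 0" using E by (simp add: M_def)
  have gM: "norm (g r) \<le> M" if "r \<in> {t0..t1}" for r
  proof -
    have "norm (g r) \<le> K * norm (e r)" unfolding g_def by (rule K[OF ubB])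
    also have "\<dots> \<le> max K 0 * norm (e r)" by (simp add: mult_right_mono)
    also have "\<dots> \<le> max K 0 * E" using E that by (intro mult_left_mono) auto
    finally show ?thesis by (simp add: M_def)
  qed
  have lip: "norm (e r - e s) \<le> M * (r - s)" if "t0 \<le> s" "s \<le> r" "r \<le> t1" for s r
  proof -
    have "(g has_integral (e r - e s)) (cbox s r)" using solg[of s r] that by simp
    then have "norm (e r - e s) \<le> M * measure lborel (cbox s r)"
      using M0 gM that by (intro has_integral_bound[where f=g]) auto
    then show ?thesis using that by simp
  qed
  have step: "Q (e t) - Q (e s) \<le> (2 * (P3 * M * M) + Mx * M * M) * (t - s)^2"
    if st: "t0 \<le> s" "s \<le> t" "t \<le> t1" for s t
  proof -
    have d: "norm (e t - e s) \<le> M * (t - s)" using lip st by blast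
    have Qd: "Q (e t - e s) \<le> Mx * M * M * (t - s)^2"
    proof -
      have "Q (e t - e s) \<le> Mx * (norm (e t - e s))^2"
        unfolding Q_def Mx_def using Q_bounds(2) pos by blast
      also have "\<dots> \<le> Mx * (M * (t - s))^2"
        using d Mx by (intro mult_left_mono power_mono) auto
      finally show ?thesis by (simp add: power2_eq_square algebra_simps)
    qed
    have hint: "((\<lambda>r. inner (Pm L C_H C_L (e s)) (g r)) has_integral inner (Pm L C_H C_L (e s)) (e t - e s)) {s..t}"
      using has_integral_linear[OF solg[of s t] bounded_linear_inner_right[of "Pm L C_H C_L (e s)"]] st
      by (simp add: o_def)
    have pw: "inner (Pm L C_H C_L (e s)) (g r) \<le> P3 * M * M * (t - s)" if r: "r \<in> {s..t}" for r
    proof -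
      have "inner (Pm L C_H C_L (e s)) (g r) = inner (Pm L C_H C_L (e r)) (g r) + inner (Pm L C_H C_L (e s - e r)) (g r)"
        by (simp add: Pm_diff[symmetric] inner_diff_left)
      also have "\<dots> \<le> 0 + norm (Pm L C_H C_L (e s - e r)) * norm (g r)"
        unfolding g_def using dissip[OF pos] norm_cauchy_schwarz by (intro add_mono) auto
      also have "\<dots> \<le> (P3 * (M * (t - s))) * M"
      proof -
        have "norm (Pm L C_H C_L (e s - e r)) \<le> P3 * norm (e s - e r)"
          unfolding P3_def using Pm_norm pos by blast
        also have "norm (e s - e r) = norm (e r - e s)" by (rule norm_minus_commute)
        also have "P3 * norm (e r - e s) \<le> P3 * (M * (r - s))"
          using lip[of s r] r st P3 by (intro mult_left_mono) auto
        also have "\<dots> \<le> P3 * (M * (t - s))"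
          using r P3 M0 by (intro mult_left_mono) auto
        finally have a: "norm (Pm L C_H C_L (e s - e r)) \<le> P3 * (M * (t - s))" .
        have rr: "r \<in> {t0..t1}" using r st by auto
        have nn: "0 \<le> P3 * (M * (t - s))" using P3 M0 st by simp
        show ?thesis using mult_mono[OF a gM[OF rr] nn norm_ge_zero] by simp
      qed
      finally show ?thesis by (simp add: algebra_simps)
    qed
    have "inner (Pm L C_H C_L (e s)) (e t - e s) \<le> measure lborel {s..t} *\<^sub>R (P3 * M * M * (t - s))"
      by (rule has_integral_le[OF hint has_integral_const_real]) (rule pw)
    then have I: "inner (Pm L C_H C_L (e s)) (e t - e s) \<le> P3 * M * M * (t - s)^2"
      using st by (simp add: power2_eq_square algebra_simps)
    have "Q (e t) - Q (e s) = 2 * inner (Pm L C_H C_L (e s)) (e t - e s) + Q (e t - e s)"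
      unfolding Q_def by (rule Q_expand)
    also have "\<dots> \<le> 2 * (P3 * M * M * (t - s)^2) + Mx * M * M * (t - s)^2"
      using I Qd by linarith
    finally show ?thesis by (simp add: algebra_simps)
  qed
  have "Q (e t1) \<le> Q (e t0)"
    using subdiv[where \<phi>="\<lambda>r. Q (e r)", OF t01] step by blast
  then show ?thesis by (simp add: Q_def)
qed


theorem lemma1:
  fixes L C_H C_L R_D R_H R_L E_H E_L :: real and u :: "real \<Rightarrow> real"
  assumes "L > 0" "C_H > 0" "C_L > 0" "R_D > 0" "R_H > 0" "R_L > 0" "E_H > 0" "E_L > 0"
    and "ess_bounded u"
  shows "\<forall>\<xi> T. is_solution_from (bbc_field L C_H C_L R_D R_H R_L E_H E_L) u \<xi> T \<longrightarrow>
           uniformly_stable_solution (bbc_field L C_H C_L R_D R_H R_L E_H E_L) u \<xi> T"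
proof (intro allI impI)
  have pos: "L > 0" "C_H > 0" "C_L > 0" "R_D > 0" "R_H > 0" "R_L > 0" using assms by auto
  fix \<xi> T assume solxi: "is_solution_from (bbc_field L C_H C_L R_D R_H R_L E_H E_L) u \<xi> T"
  obtain B0 where AE: "AE t in lborel. \<bar>u t\<bar> \<le> B0" using assms(9) unfolding ess_bounded_def by blast
  from AE obtain N where N: "{t \<in> space lborel. \<not> \<bar>u t\<bar> \<le> B0} \<subseteq> N" "emeasure lborel N = 0" "N \<in> sets lborel"
    by (rule AE_E)
  have negN: "negligible N" unfolding negligible_iff_null_sets
    by (intro null_sets_completionI null_setsI N(2) N(3))
  define B where "B = max B0 0"
  define ub where "ub r = max (-B) (min B (u r))" for r
  have ubB: "\<bar>ub r\<bar> \<le> B" for r by (auto simp: ub_def B_def)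
  have ubu: "ub r = u r" if "r \<notin> N" for r
  proof -
    have "\<bar>u r\<bar> \<le> B0" using N(1) that by auto
    then show ?thesis by (auto simp: ub_def B_def)
  qed
  define m where "m = min L (min C_H C_L)"
  define Mx where "Mx = max L (max C_H C_L)"
  have m0: "m > 0" using pos by (simp add: m_def)
  have mMx: "m \<le> Mx" by (simp add: m_def Mx_def)
  have Mx0: "Mx > 0" using m0 mMx by linarith
  show "uniformly_stable_solution (bbc_field L C_H C_L R_D R_H R_L E_H E_L) u \<xi> T"
    unfolding uniformly_stable_solution_def
  proof (intro allI impI)
    fix \<epsilon> :: real assume eps: "\<epsilon> > 0"
    define \<delta> where "\<delta> = \<epsilon> * m / Mx"
    show "\<exists>\<delta>>0. \<forall>t0 x. T \<le> t0 \<longrightarrow> is_solution_from (bbc_field L C_H C_L R_D R_H R_L E_H E_L) u x t0 \<longrightarrow>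
        norm (x t0 - \<xi> t0) < \<delta> \<longrightarrow> (\<forall>t\<ge>t0. norm (x t - \<xi> t) < \<epsilon>)"
    proof (intro exI[of _ \<delta>] conjI allI impI)
      show "\<delta> > 0" using eps m0 Mx0 by (simp add: \<delta>_def)
      fix t0 x t
      assume Tt0: "T \<le> t0"
        and solx: "is_solution_from (bbc_field L C_H C_L R_D R_H R_L E_H E_L) u x t0"
        and close: "norm (x t0 - \<xi> t0) < \<delta>" and tt0: "t0 \<le> t"
      define e where "e r = x r - \<xi> r" for r
      have sol: "((\<lambda>r. linf L C_H C_L R_D R_H R_L (ub r) (e r)) has_integral (e t' - e s)) {s..t'}"
        if "t0 \<le> s" "s \<le> t'" for s t'
      proof -
        have "((\<lambda>r. bbc_field L C_H C_L R_D R_H R_L E_H E_L (u r) (x r)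
                 - bbc_field L C_H C_L R_D R_H R_L E_H E_L (u r) (\<xi> r))
               has_integral ((x t' - x s) - (\<xi> t' - \<xi> s))) {s..t'}"
          using solx solxi that Tt0 unfolding is_solution_from_def
          by (intro has_integral_diff) auto
        then have "((\<lambda>r. linf L C_H C_L R_D R_H R_L (u r) (e r)) has_integral (e t' - e s)) {s..t'}"
          by (simp add: field_diff e_def algebra_simps)
        then show ?thesis
          by (rule has_integral_spike[OF negN, rotated]) (auto simp: ubu)
      qed
      have Qle: "inner (e t) (Pm L C_H C_L (e t)) \<le> inner (e t0) (Pm L C_H C_L (e t0))"
        by (rule energy[OF pos ubB sol tt0])
      have lo: "m * (norm (e t))^2 \<le> inner (e t) (Pm L C_H C_L (e t))"
        unfolding m_def using Q_bounds(1) pos by blast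
      have hi: "inner (e t0) (Pm L C_H C_L (e t0)) \<le> Mx * (norm (e t0))^2"
        unfolding Mx_def using Q_bounds(2) pos by blast
      have "(norm (e t0))^2 < \<delta>^2" using close by (simp add: e_def power_strict_mono)
      then have "Mx * (norm (e t0))^2 < Mx * \<delta>^2" using Mx0 by simp
      also have "Mx * \<delta>^2 = m * (\<epsilon>^2 * (m / Mx))" using Mx0 by (simp add: \<delta>_def power2_eq_square field_simps)
      also have "\<dots> \<le> m * \<epsilon>^2" using m0 Mx0 mMx by (intro mult_left_mono) (auto simp: field_simps intro: mult_right_mono)
      finally have "m * (norm (e t))^2 < m * \<epsilon>^2" using lo Qle hi by linarith
      then have "(norm (e t))^2 < \<epsilon>^2" using m0 by simp
      then have "norm (e t) < \<epsilon>" using eps by (simp add: power_less_imp_less_base)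
      then show "norm (x t - \<xi> t) < \<epsilon>" by (simp add: e_def)
    qed
  qed
qed

end
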